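(* Consider the scalar system $\dot x=u+a(t)x^2$, where $x,u\in\mathbb{R}$. Let $\lambda>0$, $k>0$, $\gamma_a>0$, $\mu(t)=e^{\lambda t}$ and $s=\mu x$. Apply the controller $$u=-(k+\lambda)x-\hat a x^2-\frac{\delta_{\Delta_a}}2x^3-\frac{\delta_{\Delta_a}}2x,\qquad \dot{\hat a}=\gamma_a\,\mu\, s\, x^2.$$ Then, for all initial conditions: 1. $V=\tfrac12 s^2+\tfrac1{2\gamma_a}(\ell_a-\hat a)^2$ satisfies $\dot V\le-ks^2$. 2. All signals $s,\hat a,x,u$ are bounded, and $|x(t)|\le Ce^{-\lambda t}$ for some constant $C$ depending on the initial conditions. 3. $\lim_{t\to\infty}\hat a(t)$ exists.
   Context: $a(t)$ is an unknown, piecewise continuous, time-varying scalar parameter. There is an unknown constant $\ell_a$ and a known constant $\delta_{\Delta_a}>0$ such that $|a(t)-\ell_a|\le\delta_{\Delta_a}$ for all $t\ge0$. *)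

theory Defs
  imports "HOL-Analysis.Analysis"
begin

definition piecewise_continuous :: "(real \<Rightarrow> real) \<Rightarrow> bool" where
  "piecewise_continuous a \<longleftrightarrow>
     (\<forall>T. finite {t \<in> {0..T}. \<not> continuous (at t within {0..}) a}) \<and>
     (\<forall>t\<ge>0. \<not> continuous (at t within {0..}) a \<longrightarrow>
        (\<exists>L. (a \<longlongrightarrow> L) (at_right t)) \<and> (t > 0 \<longrightarrow> (\<exists>L. (a \<longlongrightarrow> L) (at_left t))))"

definition ctrl :: "real \<Rightarrow> real \<Rightarrow> real \<Rightarrow> real \<Rightarrow> real \<Rightarrow> real" where
  "ctrl k lam \<delta> ah x = - (k + lam) * x - ah * x\<^sup>2 - (\<delta> / 2) * x ^ 3 - (\<delta> / 2) * x"

end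

theory Submission imports Defs "HOL-Real_Asymp.Real_Asymp" begin

lemma abs_le_sq: "\<bar>y::real\<bar> \<le> 1 + y^2"
proof -
  have "0 \<le> (\<bar>y\<bar> - 1)^2" by simp
  then have "2 * \<bar>y\<bar> \<le> \<bar>y\<bar>^2 + 1" by (simp add: power2_eq_square algebra_simps)
  then show ?thesis by simp
qed
lemma abs4: "\<bar>- p - q - r - w\<bar> \<le> \<bar>p\<bar> + \<bar>q\<bar> + \<bar>r\<bar> + \<bar>w::real\<bar>" by arith

lemma decr_lemma:
  fixes f :: "real \<Rightarrow> real"
  assumes cont: "continuous_on {0..} f"
    and fin: "\<forall>T. finite {t\<in>{0..T}. P t}"
    and der: "\<forall>t\<ge>0. \<not> P t \<longrightarrow> (\<exists>D. (f has_real_derivative D) (at t within {0..}) \<and> D \<le> 0)"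
    and st: "0 \<le> s" "s \<le> t"
  shows "f t \<le> f s"
proof -
  define f' where "f' u = (if \<exists>D. (f has_real_derivative D) (at u within {0..}) \<and> D \<le> 0
      then SOME D. (f has_real_derivative D) (at u within {0..}) \<and> D \<le> 0 else 0)" for u
  have f'le: "f' u \<le> 0" for u
  proof (cases "\<exists>D. (f has_real_derivative D) (at u within {0..}) \<and> D \<le> 0")
    case True then show ?thesis unfolding f'_def using someI_ex[OF True] by auto
  qed (auto simp add: f'_def)
  have "(f' has_integral (f t - f s)) {s..t}"
  proof (rule fundamental_theorem_of_calculus_interior_strong[of "{u\<in>{0..t}. P u}"])
    show "finite {u\<in>{0..t}. P u}" using fin by blast
    show "s \<le> t" by fact
    show "continuous_on {s..t} f" by (rule continuous_on_subset[OF cont]) (use st in auto)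
  next
    fix u assume u: "u \<in> {s<..<t} - {u\<in>{0..t}. P u}"
    then have u0: "u > 0" "\<not> P u" using st by auto
    then have ex: "\<exists>D. (f has_real_derivative D) (at u within {0..}) \<and> D \<le> 0" using der by auto
    have "(f has_real_derivative f' u) (at u within {0..})"
      unfolding f'_def using someI_ex[OF ex] ex by auto
    moreover have "at u within {0..} = at u"
      by (rule at_within_interior) (use u0 in auto)
    ultimately show "(f has_vector_derivative f' u) (at u)"
      by (simp add: has_real_derivative_iff_has_vector_derivative)
  qed
  then show ?thesis
    using has_integral_le[OF _ has_integral_0, of f' "f t - f s" "{s..t}"] f'le by force
qed

theorem mainTheorem4:
  fixes a :: "real \<Rightarrow> real" and la \<delta> lam k \<gamma>a :: real
    and x ah :: "real \<Rightarrow> real"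
  assumes a_pc: "piecewise_continuous a"
    and a_bound: "\<forall>t\<ge>0. \<bar>a t - la\<bar> \<le> \<delta>"
    and \<delta>_pos: "\<delta> > 0" and lam_pos: "lam > 0" and k_pos: "k > 0" and \<gamma>_pos: "\<gamma>a > 0"
    and x_cont: "continuous_on {0..} x"
    and ah_cont: "continuous_on {0..} ah"
    and x_ode: "\<forall>t\<ge>0. continuous (at t within {0..}) a \<longrightarrow>
        (x has_real_derivative (ctrl k lam \<delta> (ah t) (x t) + a t * (x t)\<^sup>2)) (at t within {0..})"
    and ah_ode: "\<forall>t\<ge>0.
        (ah has_real_derivative (\<gamma>a * exp (lam * t) * (exp (lam * t) * x t) * (x t)\<^sup>2)) (at t within {0..})"
  shows
    "(\<forall>t\<ge>0. continuous (at t within {0..}) a \<longrightarrow>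
        (\<exists>V'. ((\<lambda>\<tau>. (1/2) * (exp (lam * \<tau>) * x \<tau>)\<^sup>2 + (1 / (2 * \<gamma>a)) * (la - ah \<tau>)\<^sup>2)
                 has_real_derivative V') (at t within {0..})
              \<and> V' \<le> - k * (exp (lam * t) * x t)\<^sup>2))
     \<and> (\<exists>B. \<forall>t\<ge>0. \<bar>exp (lam * t) * x t\<bar> \<le> B \<and> \<bar>ah t\<bar> \<le> B \<and> \<bar>x t\<bar> \<le> B
                   \<and> \<bar>ctrl k lam \<delta> (ah t) (x t)\<bar> \<le> B)
     \<and> (\<exists>C. \<forall>t\<ge>0. \<bar>x t\<bar> \<le> C * exp (- lam * t))
     \<and> (\<exists>L. (ah \<longlongrightarrow> L) at_top)"
proof -
  let ?M = "\<lambda>t. exp (lam * t)"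
  let ?V = "\<lambda>\<tau>. (1/2) * (exp (lam * \<tau>) * x \<tau>)\<^sup>2 + (1 / (2 * \<gamma>a)) * (la - ah \<tau>)\<^sup>2"
  have P1: "\<exists>V'. (?V has_real_derivative V') (at t within {0..}) \<and> V' \<le> - k * (exp (lam * t) * x t)\<^sup>2"
    if t0: "t \<ge> 0" and ca: "continuous (at t within {0..}) a" for t
  proof -
    have dx: "(x has_real_derivative (ctrl k lam \<delta> (ah t) (x t) + a t * (x t)\<^sup>2)) (at t within {0..})"
      using x_ode t0 ca by auto
    have dah: "(ah has_real_derivative (\<gamma>a * exp (lam * t) * (exp (lam * t) * x t) * (x t)\<^sup>2)) (at t within {0..})"
      using ah_ode t0 by auto
    define X where "X = x t"
    define M where "M = exp (lam * t)"
    define A where "A = a t"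
    define H where "H = ah t"
    have dV: "(?V has_real_derivative
        (1/2) * (2 * (exp (lam * t) * x t) * (lam * exp (lam * t) * x t + exp (lam * t) * (ctrl k lam \<delta> (ah t) (x t) + a t * (x t)\<^sup>2)))
        + (1 / (2 * \<gamma>a)) * (2 * (la - ah t) * (- (\<gamma>a * exp (lam * t) * (exp (lam * t) * x t) * (x t)\<^sup>2)))) (at t within {0..})"
      apply (rule derivative_eq_intros dx dah refl)+
      using \<gamma>_pos by (simp_all add: field_simps power2_eq_square)
    have eq: "(1/2) * (2 * (M * X) * (lam * M * X + M * (ctrl k lam \<delta> H X + A * X\<^sup>2)))
        + (1 / (2 * \<gamma>a)) * (2 * (la - H) * (- (\<gamma>a * M * (M * X) * X\<^sup>2)))
        = - k * (M * X)\<^sup>2 + M\<^sup>2 * (X^3 * (A - la) - \<delta>/2 * (X^4 + X^2))"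
      using \<gamma>_pos unfolding ctrl_def by (simp add: field_simps power2_eq_square power3_eq_cube power4_eq_xxxx)
    have ab: "\<bar>A - la\<bar> \<le> \<delta>" using a_bound t0 by (auto simp: A_def)
    have "X^3 * (A - la) \<le> \<bar>X\<bar>^3 * \<delta>"
    proof -
      have "X^3 * (A - la) \<le> \<bar>X^3 * (A - la)\<bar>" by simp
      also have "\<dots> = \<bar>X\<bar>^3 * \<bar>A - la\<bar>" by (simp add: abs_mult power_abs)
      also have "\<dots> \<le> \<bar>X\<bar>^3 * \<delta>" using ab by (intro mult_left_mono) auto
      finally show ?thesis .
    qed
    also have "\<bar>X\<bar>^3 * \<delta> \<le> \<delta>/2 * (X^4 + X^2)"
    proof -
      have "0 \<le> (\<bar>X\<bar>^2 - \<bar>X\<bar>)^2" by simp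
      then have "2 * \<bar>X\<bar>^3 \<le> \<bar>X\<bar>^4 + \<bar>X\<bar>^2" by (simp add: power2_eq_square power3_eq_cube power4_eq_xxxx algebra_simps)
      then have "2 * \<bar>X\<bar>^3 \<le> X^4 + X^2" by (simp add: power_even_abs_numeral)
      then have "\<delta> * (2 * \<bar>X\<bar>^3) \<le> \<delta> * (X^4 + X^2)" using \<delta>_pos by (intro mult_left_mono) auto
      then show ?thesis by (simp add: field_simps)
    qed
    finally have key: "M\<^sup>2 * (X^3 * (A - la) - \<delta>/2 * (X^4 + X^2)) \<le> 0"
      by (simp add: mult_nonneg_nonpos)
    show ?thesis using dV key eq unfolding X_def M_def A_def H_def by force
  qed
  have fin: "\<forall>T. finite {t\<in>{0..T}. \<not> continuous (at t within {0..}) a}"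
    using a_pc unfolding piecewise_continuous_def by blast
  have Vcont: "continuous_on {0..} ?V"
    by (intro continuous_intros x_cont ah_cont)
  have Vdec: "?V t \<le> ?V 0" if "t \<ge> 0" for t
  proof (rule decr_lemma[OF Vcont fin])
    show "\<forall>t\<ge>0. \<not> \<not> continuous (at t within {0..}) a \<longrightarrow> (\<exists>D. (?V has_real_derivative D) (at t within {0..}) \<and> D \<le> 0)"
    proof (intro allI impI)
      fix t :: real assume "t \<ge> 0" "\<not> \<not> continuous (at t within {0..}) a"
      then obtain V' where "(?V has_real_derivative V') (at t within {0..})" "V' \<le> - k * (exp (lam * t) * x t)\<^sup>2"
        using P1 by blast
      moreover have "- k * (exp (lam * t) * x t)\<^sup>2 \<le> 0" using k_pos by simp
      ultimately show "\<exists>D. (?V has_real_derivative D) (at t within {0..}) \<and> D \<le> 0" by force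
    qed
  qed (use that in auto)
  define V0 where "V0 = ?V 0"
  define Bs where "Bs = 1 + 2 * V0"
  define Ba where "Ba = \<bar>la\<bar> + 1 + 2 * \<gamma>a * V0"
  have sB: "\<bar>exp (lam * t) * x t\<bar> \<le> Bs" if "t \<ge> 0" for t
  proof -
    let ?s = "exp (lam * t) * x t"
    have "(1/2) * ?s\<^sup>2 \<le> ?V t" using \<gamma>_pos by simp
    also have "\<dots> \<le> V0" using Vdec that V0_def by simp
    finally have "?s\<^sup>2 \<le> 2 * V0" by simp
    moreover have "\<bar>?s\<bar> \<le> 1 + ?s\<^sup>2"
      by (rule abs_le_sq)
    ultimately show ?thesis unfolding Bs_def by linarith
  qed
  have aB: "\<bar>ah t\<bar> \<le> Ba" if "t \<ge> 0" for t
  proof -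
    let ?s = "la - ah t"
    have "(1 / (2 * \<gamma>a)) * ?s\<^sup>2 \<le> ?V t" by simp
    also have "\<dots> \<le> V0" using Vdec that V0_def by simp
    finally have "?s\<^sup>2 \<le> 2 * \<gamma>a * V0" using \<gamma>_pos by (simp add: field_simps)
    moreover have "\<bar>?s\<bar> \<le> 1 + ?s\<^sup>2"
      by (rule abs_le_sq)
    ultimately show ?thesis unfolding Ba_def by linarith
  qed
  have xB: "\<bar>x t\<bar> \<le> Bs * exp (- lam * t)" if "t \<ge> 0" for t
  proof -
    have "x t = (exp (lam * t) * x t) * exp (- lam * t)" by (simp add: exp_minus field_simps)
    then have "\<bar>x t\<bar> = \<bar>exp (lam * t) * x t\<bar> * exp (- lam * t)" by (metis abs_mult abs_exp_cancel)
    also have "\<dots> \<le> Bs * exp (- lam * t)" using sB[OF that] by (intro mult_right_mono) auto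
    finally show ?thesis .
  qed
  have Bs0: "Bs \<ge> 0" using sB[of 0] by simp
  have Ba0: "Ba \<ge> 0" using aB[of 0] by simp
  have xB1: "\<bar>x t\<bar> \<le> Bs" if "t \<ge> 0" for t
  proof -
    have "exp (- lam * t) \<le> 1" using lam_pos that by simp
    then have "Bs * exp (- lam * t) \<le> Bs" using Bs0 by (simp add: mult_left_le)
    then show ?thesis using xB[OF that] by linarith
  qed
  define Bu where "Bu = (k + lam) * Bs + Ba * Bs^2 + \<delta>/2 * Bs^3 + \<delta>/2 * Bs"
  have uB: "\<bar>ctrl k lam \<delta> (ah t) (x t)\<bar> \<le> Bu" if "t \<ge> 0" for t
  proof -
    let ?X = "x t" let ?H = "ah t"
    have X: "\<bar>?X\<bar> \<le> Bs" and H: "\<bar>?H\<bar> \<le> Ba" using xB1 aB that by auto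
    have "\<bar>ctrl k lam \<delta> ?H ?X\<bar> \<le> (k + lam) * \<bar>?X\<bar> + \<bar>?H\<bar> * \<bar>?X\<bar>^2 + \<delta>/2 * \<bar>?X\<bar>^3 + \<delta>/2 * \<bar>?X\<bar>"
    proof -
      have "\<bar>ctrl k lam \<delta> ?H ?X\<bar> \<le> \<bar>(k + lam) * ?X\<bar> + \<bar>?H * ?X\<^sup>2\<bar> + \<bar>\<delta> / 2 * ?X ^ 3\<bar> + \<bar>\<delta> / 2 * ?X\<bar>"
        unfolding ctrl_def by (rule order_trans[OF _ abs4]) (simp add: algebra_simps)
      also have "\<dots> = (k + lam) * \<bar>?X\<bar> + \<bar>?H\<bar> * \<bar>?X\<bar>^2 + \<delta>/2 * \<bar>?X\<bar>^3 + \<delta>/2 * \<bar>?X\<bar>"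
        using k_pos lam_pos \<delta>_pos by (simp add: abs_mult power_abs)
      finally show ?thesis .
    qed
    also have "\<dots> \<le> Bu" unfolding Bu_def using X H k_pos lam_pos \<delta>_pos Ba0
      by (intro add_mono mult_left_mono mult_mono power_mono) auto
    finally show ?thesis .
  qed
  have P2: "\<exists>B. \<forall>t\<ge>0. \<bar>exp (lam * t) * x t\<bar> \<le> B \<and> \<bar>ah t\<bar> \<le> B \<and> \<bar>x t\<bar> \<le> B
                   \<and> \<bar>ctrl k lam \<delta> (ah t) (x t)\<bar> \<le> B"
  proof (intro exI allI impI)
    fix t :: real assume t: "t \<ge> 0"
    have Bu0: "Bu \<ge> 0" using uB[OF t] by linarith
    show "\<bar>exp (lam * t) * x t\<bar> \<le> Bs + Ba + Bu \<and> \<bar>ah t\<bar> \<le> Bs + Ba + Bu \<and> \<bar>x t\<bar> \<le> Bs + Ba + Bu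
                   \<and> \<bar>ctrl k lam \<delta> (ah t) (x t)\<bar> \<le> Bs + Ba + Bu"
      using sB[OF t] aB[OF t] xB1[OF t] uB[OF t] Bs0 Ba0 Bu0 by linarith
  qed
  have P3: "\<exists>C. \<forall>t\<ge>0. \<bar>x t\<bar> \<le> C * exp (- lam * t)" using xB by blast
  define c where "c = \<gamma>a * Bs^3 / lam"
  define g where "g t = ah t + c * exp (- lam * t)" for t
  have gdec: "g t \<le> g s" if "0 \<le> s" "s \<le> t" for s t
  proof (rule decr_lemma[where P = "\<lambda>_. False" and f = g and s = s and t = t])
    show "continuous_on {0..} g" unfolding g_def by (intro continuous_intros ah_cont)
    show "\<forall>T. finite {t \<in> {0..T}. False}" by simp
    show "\<forall>t\<ge>0. \<not> False \<longrightarrow> (\<exists>D. (g has_real_derivative D) (at t within {0..}) \<and> D \<le> 0)"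
    proof (intro allI impI)
      fix t :: real assume t: "t \<ge> 0"
      have dah: "(ah has_real_derivative (\<gamma>a * exp (lam * t) * (exp (lam * t) * x t) * (x t)\<^sup>2)) (at t within {0..})"
        using ah_ode t by auto
      have dg: "(g has_real_derivative (\<gamma>a * exp (lam * t) * (exp (lam * t) * x t) * (x t)\<^sup>2) + c * (exp (- lam * t) * (- lam))) (at t within {0..})"
        unfolding g_def by (rule derivative_eq_intros dah refl | simp)+
      have e: "\<gamma>a * exp (lam * t) * (exp (lam * t) * x t) * (x t)\<^sup>2 = \<gamma>a * (exp (lam * t) * x t)^3 * exp (- lam * t)"
        by (simp add: exp_minus field_simps power2_eq_square power3_eq_cube)
      have "(exp (lam * t) * x t)^3 \<le> Bs^3"
      proof -
        have "(exp (lam * t) * x t)^3 \<le> \<bar>exp (lam * t) * x t\<bar>^3" by (metis abs_ge_self power_abs abs_ge_self)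
        also have "\<dots> \<le> Bs^3" using sB[OF t] by (intro power_mono) auto
        finally show ?thesis .
      qed
      then have h1: "\<gamma>a * (exp (lam * t) * x t)^3 * exp (- lam * t) \<le> \<gamma>a * Bs^3 * exp (- lam * t)"
        using \<gamma>_pos by (intro mult_right_mono mult_left_mono) auto
      have ceq: "c * (exp (- lam * t) * (- lam)) = - (\<gamma>a * Bs^3 * exp (- lam * t))"
        unfolding c_def using lam_pos by (simp add: field_simps)
      from dg have dg2: "(g has_real_derivative (\<gamma>a * (exp (lam * t) * x t)^3 * exp (- lam * t) + - (\<gamma>a * Bs^3 * exp (- lam * t)))) (at t within {0..})"
        by (simp only: e ceq)
      show "\<exists>D. (g has_real_derivative D) (at t within {0..}) \<and> D \<le> 0"
      proof -
        have "\<gamma>a * (exp (lam * t) * x t)^3 * exp (- lam * t) + - (\<gamma>a * Bs^3 * exp (- lam * t)) \<le> 0"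
          using h1 by linarith
        then show ?thesis using dg2 by blast
      qed
    qed
  qed (use that in auto)
  have c0: "c \<ge> 0" unfolding c_def using \<gamma>_pos lam_pos Bs0 by simp
  have gbelow: "g t \<ge> - Ba" if "t \<ge> 0" for t
  proof -
    have "0 \<le> c * exp (- lam * t)" using c0 by simp
    moreover have "- Ba \<le> ah t" using aB[OF that] by (simp add: abs_le_iff)
    ultimately show ?thesis unfolding g_def by linarith
  qed
  define L where "L = Inf (g ` {0..})"
  have bdd: "bdd_below (g ` {0..})" using gbelow by (intro bdd_belowI2) auto
  have gL: "(g \<longlongrightarrow> L) at_top"
  proof (rule decreasing_tendsto)
    show "\<forall>\<^sub>F n in at_top. L \<le> g n"
    proof (rule eventually_at_top_linorderI[of 0])
      fix n :: real assume "n \<ge> 0"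
      then show "L \<le> g n" unfolding L_def using bdd by (intro cInf_lower) auto
    qed
    fix y assume "L < y"
    then obtain t0 where t0: "t0 \<in> {0..}" "g t0 < y"
      unfolding L_def using cInf_less_iff[OF _ bdd] by auto
    show "\<forall>\<^sub>F n in at_top. g n < y"
    proof (rule eventually_at_top_linorderI[of t0])
      fix n assume "n \<ge> t0"
      then have "g n \<le> g t0" using gdec t0(1) by auto
      then show "g n < y" using t0(2) by linarith
    qed
  qed
  have e0: "((\<lambda>t. c * exp (- lam * t)) \<longlongrightarrow> 0) at_top"
    using lam_pos by real_asymp
  have "((\<lambda>t. g t - c * exp (- lam * t)) \<longlongrightarrow> L - 0) at_top"
    by (rule tendsto_diff[OF gL e0])
  then have P4: "(ah \<longlongrightarrow> L) at_top" by (simp add: g_def)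
  show ?thesis using P1 P2 P3 P4 by blast
qed

end
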